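(* Let $k\ge1$, $\alpha\in\mathrm{ASP}$ and $\beta\in\mathrm{EA}_k$ with $k>\mathrm{sci}(\alpha)+\mathrm{inv}_k(\beta)$. Then $\mathrm{sci}(\alpha\star\beta)\le\mathrm{sci}(\alpha)+\mathrm{inv}_k(\beta)$.
   Context: $\mathrm{ASP}$ denotes the group of almost-sign-preserving permutations: bijections $\alpha:\mathbb Z\to\mathbb Z$ such that $n$ and $\alpha(n)$ have the same sign for all but finitely many $n$ (here "same sign" means both positive or both nonpositive). $\mathrm{EA}_k$ is the group of bijections $\tau:\mathbb Z\to\mathbb Z$ with $\tau(n+k)=\tau(n)+k$ for all $n$ (these lie in $\mathrm{ASP}$). For $\alpha\in\mathrm{ASP}$ let $s_\alpha(a,b)=\#\{\ell\ge b:\ \alpha(\ell)<a\}$. The Demazure product $\star$ is the (unique, well-defined, associative) operation on $\mathrm{ASP}$ characterized by $s_{\alpha\star\beta}(a,b)=\min_{\ell\in\mathbb Z}\big(s_\alpha(a,\ell)+s_\beta(\ell,b)\big)$ for all $a,b\in\mathbb Z$. An inversion of a bijection $\tau$ is a pair $(a,b)$ with $a<b$, $\tau(a)>\tau(b)$; two inversions $(a,b),(a',b')$ are $k$-equivalent if $a-a'=b-b'\equiv0\pmod k$; $\mathrm{inv}_k(\tau)$ is the number of $k$-equivalence classes of inversions. A sign-changing inversion of $\alpha$ is a pair $(x,y)$ with $x<y$ and $\alpha(x)>0\ge\alpha(y)$; $\mathrm{sci}(\alpha)$ is the number of these. *)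

theory Defs
  imports Main
begin

definition same_sign :: "int \<Rightarrow> int \<Rightarrow> bool" where
  "same_sign m n \<longleftrightarrow> (0 < m \<longleftrightarrow> 0 < n)"

definition ASP :: "(int \<Rightarrow> int) set" where
  "ASP = {\<alpha>. bij \<alpha> \<and> finite {n. \<not> same_sign n (\<alpha> n)}}"

definition EA :: "int \<Rightarrow> (int \<Rightarrow> int) set" where
  "EA k = {\<tau>. bij \<tau> \<and> (\<forall>n. \<tau> (n + k) = \<tau> n + k)}"

definition s_fun :: "(int \<Rightarrow> int) \<Rightarrow> int \<Rightarrow> int \<Rightarrow> nat" where
  "s_fun \<alpha> a b = card {l. l \<ge> b \<and> \<alpha> l < a}"

text \<open>Demazure product, via its characterization by the s-functions
  (the paper asserts existence and uniqueness within ASP).\<close>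
definition demazure :: "(int \<Rightarrow> int) \<Rightarrow> (int \<Rightarrow> int) \<Rightarrow> (int \<Rightarrow> int)" (infixl "\<star>" 70) where
  "demazure \<alpha> \<beta> = (THE \<gamma>. \<gamma> \<in> ASP \<and>
     (\<forall>a b. s_fun \<gamma> a b = (LEAST m. \<exists>l. m = s_fun \<alpha> a l + s_fun \<beta> l b)))"

definition inversions :: "(int \<Rightarrow> int) \<Rightarrow> (int \<times> int) set" where
  "inversions \<tau> = {(a, b). a < b \<and> \<tau> a > \<tau> b}"

definition k_equiv :: "int \<Rightarrow> ((int \<times> int) \<times> (int \<times> int)) set" where
  "k_equiv k = {((a, b), (a', b')). a - a' = b - b' \<and> k dvd (a - a')}"

definition inv_k :: "int \<Rightarrow> (int \<Rightarrow> int) \<Rightarrow> nat" where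
  "inv_k k \<tau> = card (inversions \<tau> // (k_equiv k \<inter> (inversions \<tau> \<times> inversions \<tau>)))"

definition sci :: "(int \<Rightarrow> int) \<Rightarrow> nat" where
  "sci \<alpha> = card {(x, y). x < y \<and> \<alpha> x > 0 \<and> \<alpha> y \<le> 0}"

end

theory Submission
  imports Defs
begin


lemma fin_bound:
  fixes S :: "int set"
  assumes "finite S"
  shows "\<exists>M. \<forall>n\<in>S. \<bar>n\<bar> \<le> M"
proof -
  let ?M = "Max (insert 0 (abs ` S))"
  have "\<forall>n\<in>S. \<bar>n\<bar> \<le> ?M" using assms by (intro ballI Max_ge) auto
  then show ?thesis by blast
qed

lemma ASP_bound:
  assumes "\<alpha> \<in> ASP"
  shows "\<exists>M. \<forall>n. \<not> same_sign n (\<alpha> n) \<longrightarrow> \<bar>n\<bar> \<le> M"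
proof -
  have "finite {n. \<not> same_sign n (\<alpha> n)}" using assms by (simp add: ASP_def)
  from fin_bound[OF this] show ?thesis by simp
qed

lemma ASP_inj: "\<alpha> \<in> ASP \<Longrightarrow> inj \<alpha>"
  by (simp add: ASP_def bij_def)

lemma s_set_finite:
  assumes "\<gamma> \<in> ASP"
  shows "finite {l. l \<ge> b \<and> \<gamma> l < a}"
proof -
  obtain M where M: "\<And>n. \<not> same_sign n (\<gamma> n) \<Longrightarrow> \<bar>n\<bar> \<le> M" using ASP_bound[OF assms] by blast
  have "{l. l \<ge> b \<and> \<gamma> l < a} \<subseteq> {b..max M 0} \<union> \<gamma> -` {1..<a}"
  proof
    fix l assume l: "l \<in> {l. l \<ge> b \<and> \<gamma> l < a}"
    show "l \<in> {b..max M 0} \<union> \<gamma> -` {1..<a}"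
    proof (cases "l \<le> max M 0")
      case True then show ?thesis using l by auto
    next
      case False
      then have "same_sign l (\<gamma> l)" using M by force
      moreover have "l > 0" using False M[of l] by (cases "same_sign l (\<gamma> l)") auto
      ultimately have "\<gamma> l > 0" by (simp add: same_sign_def)
      then show ?thesis using l by auto
    qed
  qed
  moreover have "finite (\<gamma> -` {1..<a})"
    using ASP_inj[OF assms] by (intro finite_vimageI) auto
  ultimately show ?thesis by (meson finite_Un finite_atLeastAtMost_int finite_subset)
qed

lemma s_step:
  assumes "\<gamma> \<in> ASP"
  shows "s_fun \<gamma> a b = s_fun \<gamma> a (b+1) + (if \<gamma> b < a then 1 else 0)"
proof -
  have e: "{l. l \<ge> b \<and> \<gamma> l < a} = (if \<gamma> b < a then insert b {l. l \<ge> b+1 \<and> \<gamma> l < a} else {l. l \<ge> b+1 \<and> \<gamma> l < a})"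
    by (auto simp: le_less)
  show ?thesis unfolding s_fun_def e using s_set_finite[OF assms, of "b+1" a] by auto
qed

lemma s_mono_lip:
  assumes "\<gamma> \<in> ASP"
  shows "s_fun \<gamma> a (b + int n) \<le> s_fun \<gamma> a b \<and> s_fun \<gamma> a b \<le> s_fun \<gamma> a (b + int n) + n"
proof (induction n)
  case 0 then show ?case by simp
next
  case (Suc n)
  have "s_fun \<gamma> a (b + int n) = s_fun \<gamma> a (b + int (Suc n)) + (if \<gamma> (b + int n) < a then 1 else 0)"
    using s_step[OF assms, of a "b + int n"] by (simp add: ac_simps)
  then show ?case using Suc by (auto split: if_splits)
qed

lemma s_mono:
  assumes "\<gamma> \<in> ASP" "b \<le> l"
  shows "s_fun \<gamma> a l \<le> s_fun \<gamma> a b"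
  using s_mono_lip[OF assms(1), of a b "nat (l - b)"] assms(2) by simp

lemma s_lip:
  assumes "\<gamma> \<in> ASP" "b \<le> l"
  shows "s_fun \<gamma> a b \<le> s_fun \<gamma> a l + nat (l - b)"
  using s_mono_lip[OF assms(1), of a b "nat (l - b)"] assms(2) by simp

lemma s_unique:
  assumes "\<gamma>1 \<in> ASP" "\<gamma>2 \<in> ASP" "\<And>a b. s_fun \<gamma>1 a b = s_fun \<gamma>2 a b"
  shows "\<gamma>1 = \<gamma>2"
proof
  fix b
  have "\<And>a. (\<gamma>1 b < a) = (\<gamma>2 b < a)"
  proof -
    fix a
    show "(\<gamma>1 b < a) = (\<gamma>2 b < a)"
      using s_step[OF assms(1), of a b] s_step[OF assms(2), of a b] assms(3)[of a b] assms(3)[of a "b+1"]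
      by (auto split: if_splits)
  qed
  from this[of "\<gamma>1 b + 1"] this[of "\<gamma>2 b + 1"] show "\<gamma>1 b = \<gamma>2 b" by auto
qed

definition mp :: "(int \<Rightarrow> int \<Rightarrow> nat) \<Rightarrow> (int \<Rightarrow> int \<Rightarrow> nat) \<Rightarrow> int \<Rightarrow> int \<Rightarrow> nat" where
  "mp F G a b = (LEAST m. \<exists>l. m = F a l + G l b)"

lemma Least_eqI:
  assumes "\<And>l. (T::nat) \<le> f l" "T = f l0"
  shows "(LEAST m. \<exists>l. m = f l) = T"
  using assms by (intro Least_equality) auto

lemma mp_le: "mp F G a b \<le> F a l + G l b"
  unfolding mp_def by (rule Least_le) blast

lemma mp_ex: "\<exists>l. mp F G a b = F a l + G l b"
  unfolding mp_def by (rule LeastI_ex) blast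

lemma mp_assoc: "mp (mp F G) H a b = mp F (mp G H) a b"
proof -
  obtain l where l: "mp (mp F G) H a b = mp F G a l + H l b" using mp_ex by blast
  obtain m where m: "mp F G a l = F a m + G m l" using mp_ex by blast
  obtain l' where l': "mp F (mp G H) a b = F a l' + mp G H l' b" using mp_ex by blast
  obtain m' where m': "mp G H l' b = G l' m' + H m' b" using mp_ex by blast
  have "mp (mp F G) H a b \<le> mp F (mp G H) a b"
    using mp_le[of "mp F G" H a b m'] mp_le[of F G a m' l'] l' m' by simp
  moreover have "mp F (mp G H) a b \<le> mp (mp F G) H a b"
    using mp_le[of F "mp G H" a b m] mp_le[of G H m b l] l m by simp
  ultimately show ?thesis by simp
qed



lemma EA_per_nat:
  assumes "\<beta> \<in> EA k"
  shows "\<beta> (x + int n * k) = \<beta> x + int n * k"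
proof (induction n)
  case 0 then show ?case by simp
next
  case (Suc n)
  have "\<beta> (x + int (Suc n) * k) = \<beta> ((x + int n * k) + k)" by (simp add: algebra_simps)
  also have "\<dots> = \<beta> (x + int n * k) + k" using assms by (simp add: EA_def)
  finally show ?case using Suc by (simp add: algebra_simps)
qed

lemma EA_per:
  assumes "\<beta> \<in> EA k"
  shows "\<beta> (x + j * k) = \<beta> x + j * k"
proof (cases "j \<ge> 0")
  case True
  then show ?thesis using EA_per_nat[OF assms, of x "nat j"] by simp
next
  case False
  have "\<beta> x = \<beta> ((x + j * k) + int (nat (-j)) * k)" using False by (simp add: algebra_simps)
  also have "\<dots> = \<beta> (x + j * k) + int (nat (-j)) * k" by (rule EA_per_nat[OF assms])
  finally show ?thesis using False by (simp add: algebra_simps)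
qed

lemma EA_bound:
  assumes "\<beta> \<in> EA k" "k \<ge> 1"
  shows "\<exists>C. \<forall>x. \<bar>\<beta> x - x\<bar> \<le> C"
proof -
  let ?C = "Max ((\<lambda>y. \<bar>\<beta> y - y\<bar>) ` {0..<k})"
  have "\<bar>\<beta> x - x\<bar> \<le> ?C" for x
  proof -
    define m d where "m = x mod k" and "d = x div k"
    have x: "x = m + d * k" unfolding m_def d_def by simp
    have "\<beta> (m + d * k) = \<beta> m + d * k" by (rule EA_per[OF assms(1)])
    then have e: "\<bar>\<beta> x - x\<bar> = \<bar>\<beta> m - m\<bar>" using x by simp
    have "m \<in> {0..<k}" using assms(2) unfolding m_def by simp
    then have "\<bar>\<beta> m - m\<bar> \<in> (\<lambda>y. \<bar>\<beta> y - y\<bar>) ` {0..<k}" by (rule imageI)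
    then show ?thesis unfolding e by (intro Max_ge) auto
  qed
  then show ?thesis by blast
qed

lemma EA_ASP:
  assumes "\<beta> \<in> EA k" "k \<ge> 1"
  shows "\<beta> \<in> ASP"
proof -
  obtain C where C: "\<And>x. \<bar>\<beta> x - x\<bar> \<le> C" using EA_bound[OF assms] by blast
  have "{n. \<not> same_sign n (\<beta> n)} \<subseteq> {-C..C}"
  proof
    fix n assume "n \<in> {n. \<not> same_sign n (\<beta> n)}"
    then have "\<not> same_sign n (\<beta> n)" by simp
    then have "(0 < n \<and> \<beta> n \<le> 0) \<or> (n \<le> 0 \<and> \<beta> n > 0)" unfolding same_sign_def by auto
    then show "n \<in> {-C..C}" using C[of n] unfolding abs_le_iff by auto
  qed
  then have "finite {n. \<not> same_sign n (\<beta> n)}" by (rule finite_subset) simp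
  then show ?thesis using assms(1) by (simp add: ASP_def EA_def)
qed



definition gsw :: "int \<Rightarrow> int \<Rightarrow> (int \<Rightarrow> bool) \<Rightarrow> int \<Rightarrow> int" where
  "gsw k i P x = (if k dvd (x - i) \<and> P x then x + 1 else if k dvd (x - i - 1) \<and> P (x - 1) then x - 1 else x)"

lemma dvd_excl:
  fixes k :: int
  assumes "k \<ge> 2" "k dvd (x - i)" "k dvd (x - i - 1)"
  shows False
proof -
  have "k dvd 1" using dvd_diff[OF assms(2,3)] by simp
  then show False using assms(1) by (simp add: zdvd1_eq) 
qed

lemma gsw_invol:
  assumes "k \<ge> 2"
  shows "gsw k i P (gsw k i P x) = x"
proof -
  consider (A) "k dvd (x - i) \<and> P x" | (B) "\<not> (k dvd (x - i) \<and> P x)" "k dvd (x - i - 1) \<and> P (x - 1)"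
    | (C) "\<not> (k dvd (x - i) \<and> P x)" "\<not> (k dvd (x - i - 1) \<and> P (x - 1))" by blast
  then show ?thesis
  proof cases
    case A
    then have "\<not> k dvd (x + 1 - i)" using dvd_excl[OF assms, of "x+1" i] by (auto simp: algebra_simps)
    then show ?thesis using A by (simp add: gsw_def algebra_simps)
  next
    case B
    then have g: "gsw k i P x = x - 1" by (simp add: gsw_def)
    have d: "k dvd (x - 1 - i)" using B by (metis diff_right_commute)
    show ?thesis using B d unfolding g by (simp add: gsw_def)
  next
    case C
    then have g: "gsw k i P x = x" by (simp add: gsw_def)
    show ?thesis by (simp only: g)
  qed
qed

lemma gsw_inj: "k \<ge> 2 \<Longrightarrow> inj (gsw k i P)"
  by (metis gsw_invol injI)

lemma gsw_bij: "k \<ge> 2 \<Longrightarrow> bij (gsw k i P)"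
  unfolding bij_def by (metis gsw_inj gsw_invol surjI)

lemma gsw_range: "x - 1 \<le> gsw k i P x \<and> gsw k i P x \<le> x + 1"
  by (simp add: gsw_def)

lemma gsw_ge:
  assumes "b \<le> x" "\<not> k dvd (b - i - 1)"
  shows "b \<le> gsw k i P x"
proof (cases "x = b")
  case True then show ?thesis using assms by (auto simp: gsw_def)
next
  case False then show ?thesis using assms gsw_range[of x k i P] by linarith
qed

lemma gsw_less:
  assumes "k \<ge> 2" "a < b" "\<not> (b = a + 1 \<and> k dvd (a - i) \<and> P a)"
  shows "gsw k i P a < gsw k i P b"
proof -
  have ne: "gsw k i P a \<noteq> gsw k i P b" using gsw_inj[OF assms(1)] assms(2) by (metis injD less_irrefl)
  have "gsw k i P a \<le> gsw k i P b"
  proof (cases "b = a + 1")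
    case True
    then have "gsw k i P a \<le> a" using assms(3) by (auto simp: gsw_def)
    moreover have "gsw k i P b \<ge> a + 1" using assms(3) True by (auto simp: gsw_def algebra_simps)
    ultimately show ?thesis using True by simp
  next
    case False
    then show ?thesis using assms(2) gsw_range[of a k i P] gsw_range[of b k i P] by linarith
  qed
  then show ?thesis using ne by simp
qed

lemma gsw_per: "gsw k i (\<lambda>_. True) (x + k) = gsw k i (\<lambda>_. True) x + k"
proof -
  have "(k dvd (x + k - i)) = (k dvd (x - i))" by (metis add.commute add_diff_eq dvd_add_times_triv_left_iff mult.left_neutral)
  moreover have "(k dvd (x + k - i - 1)) = (k dvd (x - i - 1))" by (metis add.commute add_diff_eq diff_add_eq dvd_add_times_triv_left_iff mult.left_neutral)
  ultimately show ?thesis by (simp add: gsw_def)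
qed



abbreviation sref :: "int \<Rightarrow> int \<Rightarrow> int \<Rightarrow> int" where
  "sref k i \<equiv> gsw k i (\<lambda>_. True)"

lemma gsw_ASP:
  assumes "k \<ge> 2" "\<gamma> \<in> ASP"
  shows "\<gamma> \<circ> gsw k i P \<in> ASP"
proof -
  let ?s = "gsw k i P"
  have fin: "finite {n. \<not> same_sign n (\<gamma> n)}" using assms(2) by (simp add: ASP_def)
  have "{n. \<not> same_sign n ((\<gamma> \<circ> ?s) n)} \<subseteq> ?s ` {n. \<not> same_sign n (\<gamma> n)} \<union> {0,1}"
  proof
    fix n assume n: "n \<in> {n. \<not> same_sign n ((\<gamma> \<circ> ?s) n)}"
    show "n \<in> ?s ` {n. \<not> same_sign n (\<gamma> n)} \<union> {0,1}"
    proof (cases "same_sign (?s n) (\<gamma> (?s n))")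
      case False
      then have "?s n \<in> {n. \<not> same_sign n (\<gamma> n)}" by simp
      then have "?s (?s n) \<in> ?s ` {n. \<not> same_sign n (\<gamma> n)}" by (rule imageI)
      then show ?thesis using gsw_invol[OF assms(1)] by simp
    next
      case True
      then have "(0 < ?s n) \<noteq> (0 < n)" using n by (auto simp: same_sign_def)
      then show ?thesis using gsw_range[of n k i P] by auto
    qed
  qed
  then have "finite {n. \<not> same_sign n ((\<gamma> \<circ> ?s) n)}"
    by (rule finite_subset) (use fin in auto)
  moreover have "bij (\<gamma> \<circ> ?s)" using assms(2) gsw_bij[OF assms(1)] by (simp add: ASP_def bij_comp)
  ultimately show ?thesis by (simp add: ASP_def)
qed

lemma id_ASP: "id \<in> ASP"
  by (simp add: ASP_def same_sign_def)

lemma sref_ASP: "k \<ge> 2 \<Longrightarrow> sref k i \<in> ASP"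
  using gsw_ASP[OF _ id_ASP, of k i "\<lambda>_. True"] by simp

definition Fs :: "int \<Rightarrow> int \<Rightarrow> int \<Rightarrow> int \<Rightarrow> nat" where
  "Fs k i l b = (if b < l then nat (l - b) else if b = l \<and> k dvd (b - i - 1) then 1 else 0)"

lemma sref_s_high:
  assumes "l + 1 \<le> b"
  shows "s_fun (sref k i) l b = 0"
proof -
  have h: "l \<le> sref k i x" if "b \<le> x" for x using assms that gsw_range[of x k i "\<lambda>_. True"] by linarith
  have "{x. x \<ge> b \<and> sref k i x < l} = {}"
  proof (rule equals0I)
    fix x assume "x \<in> {x. x \<ge> b \<and> sref k i x < l}"
    then show False using h[of x] by simp
  qed
  then show ?thesis unfolding s_fun_def by (metis card.empty)
qed

lemma sref_s_ind:
  assumes "k \<ge> 2"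
  shows "s_fun (sref k i) l (l + 1 - int n) = Fs k i l (l + 1 - int n)"
proof (induction n)
  case 0
  then show ?case using sref_s_high[of l "l+1" k i] by (simp add: Fs_def)
next
  case (Suc n)
  let ?b = "l - int n"
  have b: "l + 1 - int (Suc n) = ?b" by simp
  have st: "s_fun (sref k i) l ?b = s_fun (sref k i) l (?b + 1) + (if sref k i ?b < l then 1 else 0)"
    by (rule s_step[OF sref_ASP[OF assms]])
  have ih: "s_fun (sref k i) l (?b + 1) = Fs k i l (?b + 1)" using Suc by (simp add: algebra_simps)
  have "Fs k i l ?b = Fs k i l (?b + 1) + (if sref k i ?b < l then 1 else 0)"
  proof (cases "n = 0")
    case True
    then show ?thesis using dvd_excl[OF assms, of l i] by (auto simp: Fs_def gsw_def)
  next
    case False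
    show ?thesis
    proof (cases "n = 1")
      case True
      have e: "l - 1 - i = l - i - 1" by simp
      show ?thesis using True dvd_excl[OF assms, of "l-1" i] by (auto simp: Fs_def gsw_def e)
    next
      case False
      then have "n \<ge> 2" using \<open>n \<noteq> 0\<close> by simp
      then have "sref k i ?b < l" using gsw_range[of ?b k i "\<lambda>_. True"] by linarith
      then show ?thesis using \<open>n \<ge> 2\<close> by (simp add: Fs_def)
    qed
  qed
  then show ?case using st ih b by simp
qed

lemma sref_s:
  assumes "k \<ge> 2"
  shows "s_fun (sref k i) l b = Fs k i l b"
proof (cases "b \<le> l")
  case True
  then have e: "l + 1 - int (nat (l + 1 - b)) = b" by simp
  have "s_fun (sref k i) l (l + 1 - int (nat (l + 1 - b))) = Fs k i l (l + 1 - int (nat (l + 1 - b)))"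
    by (rule sref_s_ind[OF assms])
  then show ?thesis by (simp only: e)
next
  case False
  then show ?thesis using sref_s_high[of l b k i] by (simp add: Fs_def)
qed



lemma L3_F1:
  assumes k2: "k \<ge> 2" and g: "\<gamma> \<in> ASP" and nd: "\<not> k dvd (b - i - 1)"
  shows "s_fun (\<gamma> \<circ> gsw k i P) a b = s_fun \<gamma> a b"
proof -
  let ?s = "gsw k i P"
  have "{l. l \<ge> b \<and> (\<gamma> \<circ> ?s) l < a} = ?s ` {l. l \<ge> b \<and> \<gamma> l < a}"
  proof
    show "{l. l \<ge> b \<and> (\<gamma> \<circ> ?s) l < a} \<subseteq> ?s ` {l. l \<ge> b \<and> \<gamma> l < a}"
    proof
      fix l assume l: "l \<in> {l. l \<ge> b \<and> (\<gamma> \<circ> ?s) l < a}"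
      then have "?s l \<in> {l. l \<ge> b \<and> \<gamma> l < a}" using gsw_ge[OF _ nd, of l P] by simp
      then have "?s (?s l) \<in> ?s ` {l. l \<ge> b \<and> \<gamma> l < a}" by (rule imageI)
      then show "l \<in> ?s ` {l. l \<ge> b \<and> \<gamma> l < a}" using gsw_invol[OF k2] by simp
    qed
  next
    show "?s ` {l. l \<ge> b \<and> \<gamma> l < a} \<subseteq> {l. l \<ge> b \<and> (\<gamma> \<circ> ?s) l < a}"
      using gsw_ge[OF _ nd] gsw_invol[OF k2] by auto
  qed
  moreover have "inj_on ?s {l. l \<ge> b \<and> \<gamma> l < a}" using gsw_inj[OF k2] by (simp add: inj_on_def inj_def)
  ultimately show ?thesis unfolding s_fun_def by (simp add: card_image)
qed

lemma L3_F2: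
  assumes k2: "k \<ge> 2" and g: "\<gamma> \<in> ASP" and d: "k dvd (b - i - 1)"
  shows "s_fun (\<gamma> \<circ> gsw k i (\<lambda>x. \<gamma> x < \<gamma> (x+1))) a b
     = s_fun \<gamma> a (b+1) + (if min (\<gamma> (b-1)) (\<gamma> b) < a then 1 else 0)"
proof -
  let ?s = "gsw k i (\<lambda>x. \<gamma> x < \<gamma> (x+1))"
  have st: "s_fun (\<gamma> \<circ> ?s) a b = s_fun (\<gamma> \<circ> ?s) a (b+1) + (if (\<gamma> \<circ> ?s) b < a then 1 else 0)"
    by (rule s_step[OF gsw_ASP[OF k2 g]])
  have nd: "\<not> k dvd (b + 1 - i - 1)"
  proof
    assume "k dvd (b + 1 - i - 1)"
    then have "k dvd (b - i)" by simp
    then show False using dvd_excl[OF k2 _ d] by blast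
  qed
  have "s_fun (\<gamma> \<circ> ?s) a (b+1) = s_fun \<gamma> a (b+1)" by (rule L3_F1[OF k2 g nd])
  moreover have "(\<gamma> \<circ> ?s) b = min (\<gamma> (b-1)) (\<gamma> b)"
  proof -
    have nd2: "\<not> k dvd (b - i)" using dvd_excl[OF k2 _ d] by blast
    show ?thesis
    proof (cases "\<gamma> (b-1) < \<gamma> b")
      case True
      then show ?thesis using nd2 d by (simp add: gsw_def)
    next
      case False
      then show ?thesis using nd2 d by (simp add: gsw_def)
    qed
  qed
  ultimately show ?thesis using st by simp
qed

lemma L3:
  assumes k2: "k \<ge> 2" and g: "\<gamma> \<in> ASP"
  shows "s_fun (\<gamma> \<circ> gsw k i (\<lambda>x. \<gamma> x < \<gamma> (x+1))) a b = mp (s_fun \<gamma>) (s_fun (sref k i)) a b"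
proof -
  let ?T = "s_fun (\<gamma> \<circ> gsw k i (\<lambda>x. \<gamma> x < \<gamma> (x+1))) a b"
  let ?S = "s_fun \<gamma> a"
  have s1: "?S (b-1) = ?S b + (if \<gamma> (b-1) < a then 1 else 0)" using s_step[OF g, of a "b-1"] by simp
  have s2: "?S b = ?S (b+1) + (if \<gamma> b < a then 1 else 0)" using s_step[OF g, of a b] by simp
  have Fbb: "s_fun (sref k i) b b = (if k dvd (b - i - 1) then 1 else 0)" using sref_s[OF k2] by (simp add: Fs_def)
  have T1: "?T \<le> ?S (b+1) + 1" and T2: "?T \<le> ?S (b-1)" and T3: "?T \<le> ?S b + s_fun (sref k i) b b"
  proof -
    have "(?T \<le> ?S (b+1) + 1) \<and> (?T \<le> ?S (b-1)) \<and> (?T \<le> ?S b + s_fun (sref k i) b b)"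
    proof (cases "k dvd (b - i - 1)")
      case True
      then show ?thesis using L3_F2[OF k2 g True, of a] s1 s2 Fbb by (simp split: if_splits)
    next
      case False
      then show ?thesis using L3_F1[OF k2 g False, of _ a] s1 s2 Fbb by (simp split: if_splits)
    qed
    then show "?T \<le> ?S (b+1) + 1" "?T \<le> ?S (b-1)" "?T \<le> ?S b + s_fun (sref k i) b b" by auto
  qed
  have low: "?T \<le> ?S l + s_fun (sref k i) l b" for l
  proof (cases "l < b")
    case True
    then have "?S (b-1) \<le> ?S l" using s_mono[OF g, of l "b-1" a] by simp
    then show ?thesis using T2 by simp
  next
    case False
    show ?thesis
    proof (cases "l = b")
      case True then show ?thesis using T3 by simp
    next
      case False
      then have lb: "l > b" using \<open>\<not> l < b\<close> by simp
      then have "?S (b+1) \<le> ?S l + nat (l - (b+1))" using s_lip[OF g, of "b+1" l a] by simp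
      moreover have "s_fun (sref k i) l b = nat (l - b)" using sref_s[OF k2] lb by (simp add: Fs_def)
      ultimately show ?thesis using T1 lb by simp
    qed
  qed
  have wit: "\<exists>l. ?T = ?S l + s_fun (sref k i) l b"
  proof (cases "k dvd (b - i - 1)")
    case False
    then show ?thesis using L3_F1[OF k2 g False, of _ a] Fbb by (intro exI[of _ b]) simp
  next
    case True
    have F2: "?T = ?S (b+1) + (if min (\<gamma> (b-1)) (\<gamma> b) < a then 1 else 0)" by (rule L3_F2[OF k2 g True])
    show ?thesis
    proof (cases "min (\<gamma> (b-1)) (\<gamma> b) < a")
      case True
      have "s_fun (sref k i) (b+1) b = 1" using sref_s[OF k2] by (simp add: Fs_def)
      then show ?thesis using F2 True by (intro exI[of _ "b+1"]) simp
    next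
      case False
      have "s_fun (sref k i) (b-1) b = 0" using sref_s[OF k2] by (simp add: Fs_def)
      then show ?thesis using F2 False s1 s2 by (intro exI[of _ "b-1"]) (simp add: min_less_iff_disj)
    qed
  qed
  then obtain l0 where "?T = ?S l0 + s_fun (sref k i) l0 b" by blast
  then show ?thesis unfolding mp_def by (intro Least_eqI[symmetric] low) 
qed



lemma sci_finite:
  assumes g: "\<gamma> \<in> ASP"
  shows "finite {(x, y). x < y \<and> \<gamma> x > 0 \<and> \<gamma> y \<le> 0}"
proof -
  obtain M where M: "\<And>n. \<not> same_sign n (\<gamma> n) \<Longrightarrow> \<bar>n\<bar> \<le> M" using ASP_bound[OF g] by blast
  let ?M = "max M 0"
  have "{(x, y). x < y \<and> \<gamma> x > 0 \<and> \<gamma> y \<le> 0} \<subseteq> {-?M..?M} \<times> {-?M..?M}"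
  proof
    fix p assume p: "p \<in> {(x, y). x < y \<and> \<gamma> x > 0 \<and> \<gamma> y \<le> 0}"
    obtain x y where xy: "p = (x, y)" "x < y" "\<gamma> x > 0" "\<gamma> y \<le> 0" using p by auto
    have "-?M \<le> x \<and> x \<le> ?M \<and> -?M \<le> y \<and> y \<le> ?M"
    proof (cases "x \<le> 0")
      case True
      then have "\<not> same_sign x (\<gamma> x)" using xy by (simp add: same_sign_def)
      then have bx: "\<bar>x\<bar> \<le> M" by (rule M)
      show ?thesis
      proof (cases "y \<le> 0")
        case True then show ?thesis using bx xy by auto
      next
        case False
        then have "\<not> same_sign y (\<gamma> y)" using xy by (simp add: same_sign_def)
        then have "\<bar>y\<bar> \<le> M" by (rule M)
        then show ?thesis using bx xy by auto
      qed
    next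
      case False
      then have "\<not> same_sign y (\<gamma> y)" using xy by (simp add: same_sign_def)
      then have "\<bar>y\<bar> \<le> M" by (rule M)
      then show ?thesis using False xy by auto
    qed
    then show "p \<in> {-?M..?M} \<times> {-?M..?M}" using xy by auto
  qed
  then show ?thesis by (rule finite_subset) simp
qed

lemma boundary:
  assumes g: "\<gamma> \<in> ASP" and "x1 < x2" "\<gamma> (x1 + 1) > 0" "\<gamma> x2 \<le> 0"
  shows "nat (x2 - x1 - 1) \<le> sci \<gamma>"
proof -
  define f where "f z = (if \<gamma> z \<le> 0 then (x1 + 1, z) else (z, x2))" for z
  have inj: "inj_on f {x1+2..x2}" unfolding inj_on_def f_def by (auto split: if_splits)
  have sub: "f ` {x1+2..x2} \<subseteq> {(x, y). x < y \<and> \<gamma> x > 0 \<and> \<gamma> y \<le> 0}"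
  proof
    fix p assume "p \<in> f ` {x1+2..x2}"
    then obtain z where z: "z \<in> {x1+2..x2}" "p = f z" by auto
    show "p \<in> {(x, y). x < y \<and> \<gamma> x > 0 \<and> \<gamma> y \<le> 0}"
    proof (cases "\<gamma> z \<le> 0")
      case True then show ?thesis using z assms by (simp add: f_def)
    next
      case False
      then have "z \<noteq> x2" using assms by auto
      then show ?thesis using z assms False by (simp add: f_def)
    qed
  qed
  have "card (f ` {x1+2..x2}) = nat (x2 - x1 - 1)" using card_image[OF inj] by simp
  moreover have "card (f ` {x1+2..x2}) \<le> sci \<gamma>" unfolding sci_def
    by (rule card_mono[OF sci_finite[OF g] sub])
  ultimately show ?thesis by simp
qed

lemma subsingleton_card:
  assumes "\<And>p q. p \<in> E \<Longrightarrow> q \<in> E \<Longrightarrow> p = q"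
  shows "finite E \<and> card E \<le> 1"
proof (cases "E = {}")
  case True then show ?thesis by simp
next
  case False
  then obtain p where "p \<in> E" by blast
  then have "E = {p}" using assms by blast
  then show ?thesis by simp
qed

lemma sci_gsw:
  assumes k2: "k \<ge> 2" and g: "\<gamma> \<in> ASP" and sk: "int (sci \<gamma>) + 2 \<le> k"
  shows "sci (\<gamma> \<circ> gsw k i P) \<le> sci \<gamma> + 1"
proof -
  let ?s = "gsw k i P"
  let ?S = "\<lambda>\<gamma>. {(x, y). x < y \<and> \<gamma> x > (0::int) \<and> \<gamma> y \<le> 0}"
  define E where "E = {(x+1, x) | x. k dvd (x - i) \<and> P x \<and> \<gamma> x \<le> 0 \<and> \<gamma> (x+1) > 0}"
  have Esub: "finite E \<and> card E \<le> 1"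
  proof (rule subsingleton_card)
    fix p q assume "p \<in> E" "q \<in> E"
    then obtain x1 x2 where x1: "p = (x1+1, x1)" "k dvd (x1 - i)" "\<gamma> x1 \<le> 0" "\<gamma> (x1+1) > 0"
      and x2: "q = (x2+1, x2)" "k dvd (x2 - i)" "\<gamma> x2 \<le> 0" "\<gamma> (x2+1) > 0" unfolding E_def by blast
    have "\<not> x1 < x2" if "x1 < x2" "k dvd (x1 - i)" "k dvd (x2 - i)" "\<gamma> (x1+1) > 0" "\<gamma> x2 \<le> 0" for x1 x2
    proof -
      have "k dvd (x2 - x1)" using dvd_diff[OF that(3) that(2)] by simp
      then have "k \<le> x2 - x1" using that(1) by (simp add: zdvd_imp_le)
      moreover have "nat (x2 - x1 - 1) \<le> sci \<gamma>" by (rule boundary[OF g that(1) that(4) that(5)])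
      ultimately show ?thesis using sk by linarith
    qed
    then have "x1 = x2" using x1 x2 by (meson linorder_neqE)
    then show "p = q" using x1 x2 by simp
  qed
  have sub: "?S (\<gamma> \<circ> ?s) \<subseteq> (\<lambda>(u, v). (?s u, ?s v)) ` (?S \<gamma> \<union> E)"
  proof
    fix p assume p: "p \<in> ?S (\<gamma> \<circ> ?s)"
    obtain x y where xy: "p = (x, y)" "x < y" "\<gamma> (?s x) > 0" "\<gamma> (?s y) \<le> 0" using p by auto
    define u v where "u = ?s x" and "v = ?s y"
    have hu: "\<gamma> u > 0" "?s u = x" using xy gsw_invol[OF k2] unfolding u_def by auto
    have hv: "\<gamma> v \<le> 0" "?s v = y" using xy gsw_invol[OF k2] unfolding v_def by auto
    have bk: "p = (\<lambda>(u, v). (?s u, ?s v)) (u, v)" using xy hu hv by simp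
    have "(u, v) \<in> ?S \<gamma> \<union> E"
    proof (cases "u < v")
      case True then show ?thesis using hu hv by simp
    next
      case False
      have "u \<noteq> v" using xy(2) hu hv by auto
      then have vu: "v < u" using False by simp
      have "\<not> (?s v < ?s u)" using xy hu hv by simp
      then have "u = v + 1 \<and> k dvd (v - i) \<and> P v" using gsw_less[OF k2 vu, where P=P and i=i] by blast
      then have "(u, v) \<in> E" unfolding E_def using hu hv by auto
      then show ?thesis by simp
    qed
    then show "p \<in> (\<lambda>(u, v). (?s u, ?s v)) ` (?S \<gamma> \<union> E)" using bk by blast
  qed
  have fin: "finite (?S \<gamma> \<union> E)" using sci_finite[OF g] Esub by simp
  have "sci (\<gamma> \<circ> ?s) \<le> card ((\<lambda>(u, v). (?s u, ?s v)) ` (?S \<gamma> \<union> E))"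
    unfolding sci_def by (rule card_mono[OF finite_imageI[OF fin] sub])
  also have "\<dots> \<le> card (?S \<gamma> \<union> E)" by (rule card_image_le[OF fin])
  also have "\<dots> \<le> card (?S \<gamma>) + card E" by (rule card_Un_le)
  also have "\<dots> \<le> sci \<gamma> + 1" using Esub by (simp add: sci_def)
  finally show ?thesis .
qed



lemma shift_ASP:
  assumes g: "\<alpha> \<in> ASP"
  shows "\<alpha> \<circ> (\<lambda>x. x + c) \<in> ASP"
proof -
  have fin: "finite {n. \<not> same_sign n (\<alpha> n)}" using g by (simp add: ASP_def)
  have "{n. \<not> same_sign n ((\<alpha> \<circ> (\<lambda>x. x + c)) n)} \<subseteq> (\<lambda>y. y - c) ` {n. \<not> same_sign n (\<alpha> n)} \<union> {-\<bar>c\<bar>..\<bar>c\<bar>}"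
  proof
    fix n assume n: "n \<in> {n. \<not> same_sign n ((\<alpha> \<circ> (\<lambda>x. x + c)) n)}"
    show "n \<in> (\<lambda>y. y - c) ` {n. \<not> same_sign n (\<alpha> n)} \<union> {-\<bar>c\<bar>..\<bar>c\<bar>}"
    proof (cases "same_sign (n + c) (\<alpha> (n + c))")
      case False
      then have "n + c \<in> {n. \<not> same_sign n (\<alpha> n)}" by simp
      then have "(\<lambda>y. y - c) (n + c) \<in> (\<lambda>y. y - c) ` {n. \<not> same_sign n (\<alpha> n)}" by (rule imageI)
      then show ?thesis by simp
    next
      case True
      then have "(0 < n + c) \<noteq> (0 < n)" using n by (auto simp: same_sign_def)
      then show ?thesis by auto
    qed
  qed
  then have "finite {n. \<not> same_sign n ((\<alpha> \<circ> (\<lambda>x. x + c)) n)}"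
    by (rule finite_subset) (use fin in auto)
  moreover have "bij (\<lambda>x::int. x + c)" by (rule bijI) (auto simp: inj_def surj_def intro: exI[of _ "_ - c"])
  then have "bij (\<alpha> \<circ> (\<lambda>x. x + c))" using g by (simp add: ASP_def bij_comp)
  ultimately show ?thesis by (simp add: ASP_def)
qed

lemma sci_shift: "sci (\<alpha> \<circ> (\<lambda>x. x + c)) = sci \<alpha>"
proof -
  let ?S = "\<lambda>\<gamma>. {(x, y). x < y \<and> \<gamma> x > (0::int) \<and> \<gamma> y \<le> 0}"
  have "?S (\<alpha> \<circ> (\<lambda>x. x + c)) = (\<lambda>(x, y). (x - c, y - c)) ` ?S \<alpha>"
  proof
    show "?S (\<alpha> \<circ> (\<lambda>x. x + c)) \<subseteq> (\<lambda>(x, y). (x - c, y - c)) ` ?S \<alpha>"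
    proof
      fix p assume "p \<in> ?S (\<alpha> \<circ> (\<lambda>x. x + c))"
      then obtain x y where "p = (x, y)" "x < y" "\<alpha> (x + c) > 0" "\<alpha> (y + c) \<le> 0" by auto
      then show "p \<in> (\<lambda>(x, y). (x - c, y - c)) ` ?S \<alpha>"
        by (intro image_eqI[of _ _ "(x + c, y + c)"]) auto
    qed
  qed auto
  moreover have "inj_on (\<lambda>(x, y). (x - c, y - c)) (?S \<alpha>)" by (auto simp: inj_on_def)
  ultimately show ?thesis unfolding sci_def by (simp add: card_image)
qed

lemma s_shift_comp: "s_fun (\<alpha> \<circ> (\<lambda>x. x + c)) a b = s_fun \<alpha> a (b + c)"
proof -
  have "{l. l \<ge> b \<and> (\<alpha> \<circ> (\<lambda>x. x + c)) l < a} = (\<lambda>x. x - c) ` {l. l \<ge> b + c \<and> \<alpha> l < a}"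
  proof
    show "{l. l \<ge> b \<and> (\<alpha> \<circ> (\<lambda>x. x + c)) l < a} \<subseteq> (\<lambda>x. x - c) ` {l. l \<ge> b + c \<and> \<alpha> l < a}"
    proof
      fix l assume "l \<in> {l. l \<ge> b \<and> (\<alpha> \<circ> (\<lambda>x. x + c)) l < a}"
      then show "l \<in> (\<lambda>x. x - c) ` {l. l \<ge> b + c \<and> \<alpha> l < a}"
        by (intro image_eqI[of _ _ "l + c"]) auto
    qed
  qed auto
  moreover have "inj_on (\<lambda>x::int. x - c) A" for A by (auto simp: inj_on_def)
  ultimately show ?thesis unfolding s_fun_def by (simp add: card_image)
qed

lemma s_shift: "s_fun (\<lambda>x. x + c) l b = nat (l - c - b)"
proof -
  have "{x. x \<ge> b \<and> x + c < l} = {b..<l - c}" by auto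
  then show ?thesis unfolding s_fun_def by simp
qed

lemma mp_shift:
  assumes g: "\<alpha> \<in> ASP"
  shows "mp (s_fun \<alpha>) (s_fun (\<lambda>x. x + c)) a b = s_fun \<alpha> a (b + c)"
  unfolding mp_def
proof (rule Least_eqI)
  fix l
  show "s_fun \<alpha> a (b + c) \<le> s_fun \<alpha> a l + s_fun (\<lambda>x. x + c) l b"
  proof (cases "b + c \<le> l")
    case True
    then show ?thesis using s_lip[OF g True, of a] by (simp add: s_shift algebra_simps)
  next
    case False
    then show ?thesis using s_mono[OF g, of l "b + c" a] by simp
  qed
next
  show "s_fun \<alpha> a (b + c) = s_fun \<alpha> a (b + c) + s_fun (\<lambda>x. x + c) (b + c) b" by (simp add: s_shift)
qed



definition Rset :: "int \<Rightarrow> int \<Rightarrow> (int \<Rightarrow> int) \<Rightarrow> (int \<times> int) set" where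
  "Rset k c \<beta> = {p \<in> inversions \<beta>. c \<le> fst p \<and> fst p < c + k}"

lemma inv_trans:
  assumes "\<beta> \<in> EA k" "(a, b) \<in> inversions \<beta>"
  shows "(a + j * k, b + j * k) \<in> inversions \<beta>"
  using assms(2) EA_per[OF assms(1), of a j] EA_per[OF assms(1), of b j] by (simp add: inversions_def)

lemma dvd_small:
  fixes k d :: int
  assumes "k dvd d" "\<bar>d\<bar> < k"
  shows "d = 0"
proof (rule ccontr)
  assume "d \<noteq> 0"
  then have "0 < \<bar>d\<bar>" by simp
  moreover have "k dvd \<bar>d\<bar>" using assms(1) by simp
  ultimately have "k \<le> \<bar>d\<bar>" using zdvd_imp_le by blast
  then show False using assms(2) by simp
qed

lemma inv_k_R:
  assumes b: "\<beta> \<in> EA k" and k1: "k \<ge> 1"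
  shows "inv_k k \<beta> = card (Rset k c \<beta>)"
proof -
  let ?I = "inversions \<beta>"
  let ?E = "k_equiv k \<inter> (?I \<times> ?I)"
  have eq: "equiv ?I ?E"
    unfolding equiv_def refl_on_def sym_def trans_def k_equiv_def
    by (auto simp: dvd_diff) (metis dvd_minus_iff minus_diff_eq, metis dvd_add diff_add_eq_diff_diff_swap diff_add_cancel)
  define g where "g p = ?E `` {p}" for p
  have "bij_betw g (Rset k c \<beta>) (?I // ?E)"
  proof (rule bij_betw_imageI)
    show "inj_on g (Rset k c \<beta>)"
    proof (rule inj_onI)
      fix p q assume p: "p \<in> Rset k c \<beta>" and q: "q \<in> Rset k c \<beta>" and gq: "g p = g q"
      then have "(p, q) \<in> ?E" using eq_equiv_class[OF gq[unfolded g_def] eq] unfolding Rset_def by blast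
      then obtain a b a' b' where pq: "p = (a, b)" "q = (a', b')" "a - a' = b - b'" "k dvd (a - a')"
        unfolding k_equiv_def by auto
      have "\<bar>a - a'\<bar> < k" using p q pq by (auto simp: Rset_def)
      then have "a - a' = 0" using dvd_small pq(4) by blast
      then show "p = q" using pq by simp
    qed
  next
    show "g ` Rset k c \<beta> = ?I // ?E"
    proof
      show "g ` Rset k c \<beta> \<subseteq> ?I // ?E"
        unfolding g_def Rset_def by (auto intro: quotientI)
    next
      show "?I // ?E \<subseteq> g ` Rset k c \<beta>"
      proof
        fix X assume "X \<in> ?I // ?E"
        then obtain p where p: "p \<in> ?I" "X = ?E `` {p}" by (auto elim: quotientE)
        obtain a b where ab: "p = (a, b)" by fastforce
        define j where "j = - ((a - c) div k)"
        have jr: "c \<le> a + j * k \<and> a + j * k < c + k"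
        proof -
          have "a + j * k = c + (a - c) mod k" unfolding j_def
            by (simp add: algebra_simps minus_mod_eq_mult_div[symmetric])
          then show ?thesis using k1 by simp
        qed
        let ?p' = "(a + j * k, b + j * k)"
        have p'I: "?p' \<in> ?I" using inv_trans[OF b, of a b j] p ab by simp
        then have p'R: "?p' \<in> Rset k c \<beta>" using jr by (simp add: Rset_def)
        have "(p, ?p') \<in> ?E" using p ab p'I by (auto simp: k_equiv_def)
        then have "?E `` {p} = ?E `` {?p'}" by (rule equiv_class_eq[OF eq])
        then show "X \<in> g ` Rset k c \<beta>" using p p'R unfolding g_def by blast
      qed
    qed
  qed
  then have "card (Rset k c \<beta>) = card (?I // ?E)" by (rule bij_betw_same_card)
  then show ?thesis by (simp add: inv_k_def)
qed

lemma R_finite: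
  assumes b: "\<beta> \<in> EA k" and k1: "k \<ge> 1"
  shows "finite (Rset k c \<beta>)"
proof -
  obtain C where C: "\<And>x. \<bar>\<beta> x - x\<bar> \<le> C" using EA_bound[OF b k1] by blast
  have "Rset k c \<beta> \<subseteq> {c..<c+k} \<times> {c..c+k+2*C}"
  proof
    fix p assume p: "p \<in> Rset k c \<beta>"
    obtain a b where ab: "p = (a, b)" by fastforce
    have h: "c \<le> a" "a < c + k" "a < b" "\<beta> b < \<beta> a" using p ab by (auto simp: Rset_def inversions_def)
    have "b < a + 2 * C" using C[of a] C[of b] h(4) by (simp add: abs_le_iff) 
    then show "p \<in> {c..<c+k} \<times> {c..c+k+2*C}" using h ab by auto
  qed
  then show ?thesis by (rule finite_subset) simp
qed

lemma incr_no_inv: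
  assumes "\<And>x. \<beta> x < \<beta> (x + 1)"
  shows "inversions \<beta> = {}"
proof -
  have "\<beta> x < \<beta> (x + 1 + int n)" for x n
  proof (induction n)
    case 0 then show ?case using assms by simp
  next
    case (Suc n)
    then show ?case using assms[of "x + 1 + int n"] by (simp add: algebra_simps)
  qed
  then have "a < b \<Longrightarrow> \<beta> a < \<beta> b" for a b
    using \<open>\<And>x n. \<beta> x < \<beta> (x + 1 + int n)\<close>[of a "nat (b - a - 1)"] by simp
  then show ?thesis unfolding inversions_def by fastforce
qed

lemma no_inv:
  assumes b: "\<beta> \<in> EA k" and k1: "k \<ge> 1" and z: "inv_k k \<beta> = 0"
  shows "inversions \<beta> = {}"
proof (rule ccontr)
  assume "inversions \<beta> \<noteq> {}"
  then obtain a b where ab: "(a, b) \<in> inversions \<beta>" by auto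
  define j where "j = - (a div k)"
  have jr: "0 \<le> a + j * k \<and> a + j * k < 0 + k"
  proof -
    have "a + j * k = a mod k" unfolding j_def by (simp add: algebra_simps minus_mod_eq_mult_div[symmetric])
    then show ?thesis using k1 by simp
  qed
  have "(a + j * k, b + j * k) \<in> Rset k 0 \<beta>" using inv_trans[OF b ab, of j] jr by (simp add: Rset_def)
  then have "card (Rset k 0 \<beta>) \<noteq> 0" using R_finite[OF b k1, of 0] by auto
  then show False using z inv_k_R[OF b k1, of 0] by simp
qed



lemma sref_window:
  assumes k2: "k \<ge> 2" and "i \<le> a" "a < i + k"
  shows "sref k i a = (if a = i then i + 1 else if a = i + 1 then i else a)"
proof -
  have d1: "k dvd (a - i) \<longleftrightarrow> a = i"
  proof
    assume dd: "k dvd (a - i)"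
    have "\<bar>a - i\<bar> < k" using assms by simp
    then have "a - i = 0" by (rule dvd_small[OF dd])
    then show "a = i" by simp
  qed simp
  have d2: "k dvd (a - i - 1) \<longleftrightarrow> a = i + 1"
  proof
    assume d: "k dvd (a - i - 1)"
    show "a = i + 1"
    proof (cases "a = i")
      case True
      then have "k dvd 1" using d by simp
      then show ?thesis using k2 by (simp add: zdvd1_eq)
    next
      case False
      then have "\<bar>a - i - 1\<bar> < k" using assms by simp
      then have "a - i - 1 = 0" by (rule dvd_small[OF d])
      then show ?thesis by simp
    qed
  qed simp
  show ?thesis using d1 d2 by (simp add: gsw_def)
qed

lemma G_key:
  assumes k2: "k \<ge> 2" and p: "(a, b) \<in> Rset k i f" and ne: "(a, b) \<noteq> (i, i + 1)"
  shows "(sref k i a, sref k i b) \<in> Rset k i (f \<circ> sref k i) \<and> (sref k i a, sref k i b) \<noteq> (i, i + 1)"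
proof -
  have h: "i \<le> a" "a < i + k" "a < b" "f b < f a" using p by (auto simp: Rset_def inversions_def)
  have w: "sref k i a = (if a = i then i + 1 else if a = i + 1 then i else a)" by (rule sref_window[OF k2 h(1,2)])
  have nd: "\<not> (b = a + 1 \<and> k dvd (a - i) \<and> True)"
  proof
    assume "b = a + 1 \<and> k dvd (a - i) \<and> True"
    moreover then have "\<bar>a - i\<bar> < k" using h by simp
    ultimately have "a - i = 0" using dvd_small by blast
    then have "a = i" by simp
    then show False using ne \<open>b = a + 1 \<and> k dvd (a - i) \<and> True\<close> by simp
  qed
  have lt: "sref k i a < sref k i b" by (rule gsw_less[OF k2 h(3) nd])
  have win: "i \<le> sref k i a \<and> sref k i a < i + k" using w h k2 by auto
  have inv: "(f \<circ> sref k i) (sref k i b) < (f \<circ> sref k i) (sref k i a)" using h(4) gsw_invol[OF k2] by simp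
  have ne2: "(sref k i a, sref k i b) \<noteq> (i, i + 1)"
  proof
    assume e: "(sref k i a, sref k i b) = (i, i + 1)"
    then have "a = i + 1" using w by (simp split: if_splits)
    moreover have "b = sref k i (i + 1)" using e gsw_invol[OF k2, of i "\<lambda>_. True" b] by simp
    moreover have "sref k i (i + 1) = i" using sref_window[OF k2, of i "i + 1"] k2 by simp
    ultimately show False using h(3) by simp
  qed
  show ?thesis using lt win inv ne2 by (simp add: Rset_def inversions_def)
qed

lemma R_swap:
  assumes k2: "k \<ge> 2" and b: "\<beta> \<in> EA k" and desc: "\<beta> (i + 1) < \<beta> i"
  shows "card (Rset k i \<beta>) = card (Rset k i (\<beta> \<circ> sref k i)) + 1"
proof -
  let ?s = "sref k i"
  let ?b' = "\<beta> \<circ> ?s"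
  let ?sw = "\<lambda>(a, b). (?s a, ?s b)"
  have s_i: "?s i = i + 1" using sref_window[OF k2, of i i] k2 by simp
  have s_i1: "?s (i + 1) = i" using sref_window[OF k2, of i "i + 1"] k2 by simp
  have bb: "?b' \<circ> ?s = \<beta>" using gsw_invol[OF k2] by (simp add: fun_eq_iff)
  have mem: "(i, i + 1) \<in> Rset k i \<beta>" using desc k2 by (simp add: Rset_def inversions_def)
  have nmem: "(i, i + 1) \<notin> Rset k i ?b'" using desc s_i s_i1 by (simp add: Rset_def inversions_def)
  have eqs: "?sw ` Rset k i ?b' = Rset k i \<beta> - {(i, i + 1)}"
  proof
    show "?sw ` Rset k i ?b' \<subseteq> Rset k i \<beta> - {(i, i + 1)}"
    proof
      fix q assume "q \<in> ?sw ` Rset k i ?b'"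
      then obtain a b where ab: "(a, b) \<in> Rset k i ?b'" "q = (?s a, ?s b)" by auto
      have "(a, b) \<noteq> (i, i + 1)" using ab nmem by auto
      from G_key[OF k2 ab(1) this] show "q \<in> Rset k i \<beta> - {(i, i + 1)}" using ab bb by simp
    qed
  next
    show "Rset k i \<beta> - {(i, i + 1)} \<subseteq> ?sw ` Rset k i ?b'"
    proof
      fix q assume q: "q \<in> Rset k i \<beta> - {(i, i + 1)}"
      obtain a b where ab: "q = (a, b)" by fastforce
      have "(?s a, ?s b) \<in> Rset k i ?b'" using G_key[OF k2, of a b i \<beta>] q ab by simp
      moreover have "q = ?sw (?s a, ?s b)" using ab gsw_invol[OF k2] by simp
      ultimately show "q \<in> ?sw ` Rset k i ?b'" by blast
    qed
  qed
  have inj: "inj_on ?sw (Rset k i ?b')"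
  proof (rule inj_onI)
    fix p q assume "p \<in> Rset k i ?b'" "q \<in> Rset k i ?b'" and e: "?sw p = ?sw q"
    obtain a b a' b' where pq: "p = (a, b)" "q = (a', b')" by fastforce
    have "?s a = ?s a'" "?s b = ?s b'" using e pq by auto
    then have "?s (?s a) = ?s (?s a')" "?s (?s b) = ?s (?s b')" by simp_all
    then show "p = q" using pq gsw_invol[OF k2] by simp
  qed
  have fin: "finite (Rset k i \<beta>)" using R_finite[OF b] k2 by simp
  have "card (Rset k i \<beta>) = card (Rset k i \<beta> - {(i, i + 1)}) + 1"
  proof -
    have "card (Rset k i \<beta>) > 0" using fin mem by (auto simp: card_gt_0_iff)
    then show ?thesis using fin mem by (simp add: card_Diff_singleton)
  qed
  also have "\<dots> = card (Rset k i ?b') + 1" using card_image[OF inj] eqs by simp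
  finally show ?thesis .
qed



lemma EA_shift:
  assumes b: "\<beta> \<in> EA k" and k1: "k \<ge> 1" and z: "inv_k k \<beta> = 0"
  shows "\<beta> = (\<lambda>x. x + \<beta> 0)"
proof -
  have I: "inversions \<beta> = {}" by (rule no_inv[OF b k1 z])
  have inj: "inj \<beta>" and sj: "surj \<beta>" using b by (auto simp: EA_def bij_def)
  have mono: "x < y \<Longrightarrow> \<beta> x < \<beta> y" for x y
  proof -
    assume xy: "x < y"
    have "(x, y) \<notin> inversions \<beta>" using I by simp
    then have "\<beta> x \<le> \<beta> y" using xy by (simp add: inversions_def)
    moreover have "\<beta> x \<noteq> \<beta> y" using inj xy by (metis injD less_irrefl)
    ultimately show "\<beta> x < \<beta> y" by simp
  qed
  have step: "\<beta> (x + 1) = \<beta> x + 1" for x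
  proof (rule ccontr)
    assume ne: "\<beta> (x + 1) \<noteq> \<beta> x + 1"
    have "\<beta> x < \<beta> (x + 1)" using mono[of x "x+1"] by simp
    then have gt: "\<beta> x + 1 < \<beta> (x + 1)" using ne by simp
    have "\<beta> x + 1 \<in> range \<beta>" using sj by simp
    then obtain y where y: "\<beta> y = \<beta> x + 1" by (auto simp: image_iff)
    have "\<not> y \<le> x"
    proof
      assume "y \<le> x"
      then consider "y < x" | "y = x" by linarith
      then have "\<beta> y \<le> \<beta> x"
      proof cases
        case 1 then show ?thesis using mono[of y x] by simp
      qed simp
      then show False using y by simp
    qed
    moreover have "\<not> y \<ge> x + 1"
    proof
      assume "y \<ge> x + 1"
      then consider "x + 1 < y" | "y = x + 1" by linarith
      then have "\<beta> (x + 1) \<le> \<beta> y"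
      proof cases
        case 1 then show ?thesis using mono[of "x+1" y] by simp
      qed simp
      then show False using y gt by simp
    qed
    ultimately show False by simp
  qed
  have pos: "\<beta> (int n) = int n + \<beta> 0" for n
  proof (induction n)
    case 0 then show ?case by simp
  next
    case (Suc n)
    have "\<beta> (int (Suc n)) = \<beta> (int n + 1)" by (metis of_nat_Suc add.commute)
    also have "\<dots> = \<beta> (int n) + 1" by (rule step)
    finally show ?case using Suc by simp
  qed
  have neg: "\<beta> (- int n) = - int n + \<beta> 0" for n
  proof (induction n)
    case 0 then show ?case by simp
  next
    case (Suc n)
    have "\<beta> (- int n) = \<beta> ((- int (Suc n)) + 1)" by simp
    also have "\<dots> = \<beta> (- int (Suc n)) + 1" by (rule step)
    finally show ?case using Suc by simp
  qed
  have "\<beta> x = x + \<beta> 0" for x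
  proof (cases "x \<ge> 0")
    case True then show ?thesis using pos[of "nat x"] by simp
  next
    case False then show ?thesis using neg[of "nat (- x)"] by simp
  qed
  then show ?thesis by (rule ext)
qed

lemma descent:
  assumes b: "\<beta> \<in> EA k" and k1: "k \<ge> 1" and nz: "inv_k k \<beta> \<noteq> 0"
  shows "\<exists>i. \<beta> (i + 1) < \<beta> i"
proof (rule ccontr)
  assume "\<not> (\<exists>i. \<beta> (i + 1) < \<beta> i)"
  moreover have "inj \<beta>" using b by (simp add: EA_def bij_def)
  ultimately have "\<beta> x < \<beta> (x + 1)" for x
  proof -
    have "\<beta> (x + 1) \<noteq> \<beta> x"
    proof
      assume "\<beta> (x + 1) = \<beta> x"
      then have "x + 1 = x" by (rule injD[OF \<open>inj \<beta>\<close>])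
      then show False by simp
    qed
    moreover have "\<not> \<beta> (x + 1) < \<beta> x" using \<open>\<not> (\<exists>i. \<beta> (i + 1) < \<beta> i)\<close> by blast
    ultimately show ?thesis by simp
  qed
  then have "inversions \<beta> = {}" by (rule incr_no_inv)
  then have "Rset k 0 \<beta> = {}" by (simp add: Rset_def)
  then show False using nz inv_k_R[OF b k1, of 0] by simp
qed

lemma sref_EA:
  assumes b: "\<beta> \<in> EA k" and k2: "k \<ge> 2"
  shows "\<beta> \<circ> sref k i \<in> EA k"
proof -
  have "bij (\<beta> \<circ> sref k i)" using b gsw_bij[OF k2] by (simp add: EA_def bij_comp)
  moreover have "(\<beta> \<circ> sref k i) (n + k) = (\<beta> \<circ> sref k i) n + k" for n
    using b gsw_per[of k i n] by (simp add: EA_def)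
  ultimately show ?thesis by (simp add: EA_def)
qed

lemma gsw_desc:
  assumes b: "\<beta> \<in> EA k" and k2: "k \<ge> 2" and desc: "\<beta> (i + 1) < \<beta> i"
  shows "gsw k i (\<lambda>x. (\<beta> \<circ> sref k i) x < (\<beta> \<circ> sref k i) (x + 1)) = sref k i"
proof -
  have P: "(\<beta> \<circ> sref k i) x < (\<beta> \<circ> sref k i) (x + 1)" if d: "k dvd (x - i)" for x
  proof -
    obtain j where j: "x - i = k * j" using d by (auto elim: dvdE)
    then have x: "x = i + j * k" by (simp add: algebra_simps)
    have nd: "\<not> k dvd (x - i - 1)" using dvd_excl[OF k2 d] by blast
    have "k dvd (x + 1 - i - 1)" using d by simp
    moreover have "\<not> k dvd (x + 1 - i)"
    proof
      assume h1: "k dvd (x + 1 - i)"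
      have h2: "k dvd (x + 1 - i - 1)" using d by simp
      show False using dvd_excl[OF k2 h1 h2] .
    qed
    ultimately have s1: "sref k i (x + 1) = x" by (simp add: gsw_def)
    have s0: "sref k i x = x + 1" using d by (simp add: gsw_def)
    have "\<beta> (x + 1) < \<beta> x"
      using desc EA_per[OF b, of i j] EA_per[OF b, of "i + 1" j] x by (simp add: algebra_simps)
    then show ?thesis using s0 s1 by simp
  qed
  show ?thesis
  proof
    fix x
    show "gsw k i (\<lambda>x. (\<beta> \<circ> sref k i) x < (\<beta> \<circ> sref k i) (x + 1)) x = sref k i x"
    proof (cases "k dvd (x - i)")
      case True then show ?thesis using P[OF True] by (simp add: gsw_def)
    next
      case False
      show ?thesis
      proof (cases "k dvd (x - i - 1)")
        case True
        then have "k dvd (x - 1 - i)" by (metis diff_right_commute)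
        then have "(\<beta> \<circ> sref k i) (x - 1) < (\<beta> \<circ> sref k i) (x - 1 + 1)" by (rule P)
        then show ?thesis using False True by (simp add: gsw_def)
      next
        case F2: False then show ?thesis using False by (simp add: gsw_def)
      qed
    qed
  qed
qed

lemma main_ind:
  "\<forall>\<beta> \<alpha>. \<beta> \<in> EA k \<longrightarrow> \<alpha> \<in> ASP \<longrightarrow> inv_k k \<beta> = n \<longrightarrow> int (sci \<alpha> + n) < k \<longrightarrow> k \<ge> 1 \<longrightarrow>
     (\<exists>\<gamma>\<in>ASP. (\<forall>a b. s_fun \<gamma> a b = mp (s_fun \<alpha>) (s_fun \<beta>) a b) \<and> sci \<gamma> \<le> sci \<alpha> + n)"
proof (induction n)
  case 0
  show ?case
  proof (intro allI impI)
    fix \<beta> \<alpha> assume b: "\<beta> \<in> EA k" and a: "\<alpha> \<in> ASP" and z: "inv_k k \<beta> = 0" and "int (sci \<alpha> + 0) < k" and k1: "k \<ge> 1"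
    define c where "c = \<beta> 0"
    have be: "\<beta> = (\<lambda>x. x + c)" unfolding c_def by (rule EA_shift[OF b k1 z])
    show "\<exists>\<gamma>\<in>ASP. (\<forall>a b. s_fun \<gamma> a b = mp (s_fun \<alpha>) (s_fun \<beta>) a b) \<and> sci \<gamma> \<le> sci \<alpha> + 0"
    proof (intro bexI[of _ "\<alpha> \<circ> (\<lambda>x. x + c)"] conjI allI)
      fix x y
      show "s_fun (\<alpha> \<circ> (\<lambda>x. x + c)) x y = mp (s_fun \<alpha>) (s_fun \<beta>) x y"
        unfolding be s_shift_comp by (rule mp_shift[OF a, symmetric])
    next
      show "sci (\<alpha> \<circ> (\<lambda>x. x + c)) \<le> sci \<alpha> + 0" using sci_shift by simp
    next
      show "\<alpha> \<circ> (\<lambda>x. x + c) \<in> ASP" by (rule shift_ASP[OF a])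
    qed
  qed
next
  case (Suc n)
  show ?case
  proof (intro allI impI)
    fix \<beta> \<alpha> assume b: "\<beta> \<in> EA k" and a: "\<alpha> \<in> ASP" and z: "inv_k k \<beta> = Suc n"
      and sk: "int (sci \<alpha> + Suc n) < k" and k1: "k \<ge> 1"
    have k2: "k \<ge> 2" using sk by simp
    obtain i where desc: "\<beta> (i + 1) < \<beta> i" using descent[OF b k1] z by auto
    let ?b' = "\<beta> \<circ> sref k i"
    have b': "?b' \<in> EA k" by (rule sref_EA[OF b k2])
    have "card (Rset k i \<beta>) = card (Rset k i ?b') + 1" by (rule R_swap[OF k2 b desc])
    then have z': "inv_k k ?b' = n" using inv_k_R[OF b k1, of i] inv_k_R[OF b' k1, of i] z by simp
    obtain \<gamma>' where g': "\<gamma>' \<in> ASP" and sg': "\<And>a b. s_fun \<gamma>' a b = mp (s_fun \<alpha>) (s_fun ?b') a b"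
      and cg': "sci \<gamma>' \<le> sci \<alpha> + n"
      using Suc.IH b' a z' sk k1 by force
    let ?\<gamma> = "\<gamma>' \<circ> gsw k i (\<lambda>x. \<gamma>' x < \<gamma>' (x + 1))"
    have b'ASP: "?b' \<in> ASP" using EA_ASP[OF b' k1] .
    have sb: "s_fun \<beta> l c = mp (s_fun ?b') (s_fun (sref k i)) l c" for l c
    proof -
      have "s_fun (?b' \<circ> gsw k i (\<lambda>x. ?b' x < ?b' (x + 1))) l c = mp (s_fun ?b') (s_fun (sref k i)) l c"
        by (rule L3[OF k2 b'ASP])
      moreover have "?b' \<circ> gsw k i (\<lambda>x. ?b' x < ?b' (x + 1)) = \<beta>"
        using gsw_desc[OF b k2 desc] gsw_invol[OF k2] by (simp add: fun_eq_iff)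
      ultimately show ?thesis by simp
    qed
    show "\<exists>\<gamma>\<in>ASP. (\<forall>a b. s_fun \<gamma> a b = mp (s_fun \<alpha>) (s_fun \<beta>) a b) \<and> sci \<gamma> \<le> sci \<alpha> + Suc n"
    proof (intro bexI[of _ ?\<gamma>] conjI allI)
      fix x y
      have "mp (s_fun \<alpha>) (s_fun \<beta>) x y = mp (s_fun \<alpha>) (mp (s_fun ?b') (s_fun (sref k i))) x y"
      proof -
        have "s_fun \<beta> = mp (s_fun ?b') (s_fun (sref k i))" using sb by (simp add: fun_eq_iff)
        then show ?thesis by simp
      qed
      also have "\<dots> = mp (mp (s_fun \<alpha>) (s_fun ?b')) (s_fun (sref k i)) x y" by (rule mp_assoc[symmetric])
      also have "\<dots> = mp (s_fun \<gamma>') (s_fun (sref k i)) x y"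
      proof -
        have "mp (s_fun \<alpha>) (s_fun ?b') = s_fun \<gamma>'" using sg' by (simp add: fun_eq_iff)
        then show ?thesis by simp
      qed
      also have "\<dots> = s_fun ?\<gamma> x y" by (rule L3[OF k2 g', symmetric])
      finally show "s_fun ?\<gamma> x y = mp (s_fun \<alpha>) (s_fun \<beta>) x y" by simp
    next
      have "int (sci \<gamma>') + 2 \<le> k" using cg' sk by linarith
      then have "sci ?\<gamma> \<le> sci \<gamma>' + 1" by (rule sci_gsw[OF k2 g'])
      then show "sci ?\<gamma> \<le> sci \<alpha> + Suc n" using cg' by simp
    next
      show "?\<gamma> \<in> ASP" by (rule gsw_ASP[OF k2 g'])
    qed
  qed
qed

theorem mainTheorem18:
  fixes k :: int and \<alpha> \<beta> :: "int \<Rightarrow> int"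
  assumes "k \<ge> 1" and "\<alpha> \<in> ASP" and "\<beta> \<in> EA k"
    and "k > int (sci \<alpha> + inv_k k \<beta>)"
  shows "sci (\<alpha> \<star> \<beta>) \<le> sci \<alpha> + inv_k k \<beta>"
proof -
  obtain \<gamma> where g: "\<gamma> \<in> ASP" and sg: "\<And>a b. s_fun \<gamma> a b = mp (s_fun \<alpha>) (s_fun \<beta>) a b"
    and cg: "sci \<gamma> \<le> sci \<alpha> + inv_k k \<beta>"
    using main_ind[of k "inv_k k \<beta>"] assms by blast
  have "\<alpha> \<star> \<beta> = \<gamma>"
    unfolding demazure_def
  proof (rule the_equality)
    show "\<gamma> \<in> ASP \<and> (\<forall>a b. s_fun \<gamma> a b = (LEAST m. \<exists>l. m = s_fun \<alpha> a l + s_fun \<beta> l b))"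
      using g sg by (simp add: mp_def)
  next
    fix \<gamma>2 assume h: "\<gamma>2 \<in> ASP \<and> (\<forall>a b. s_fun \<gamma>2 a b = (LEAST m. \<exists>l. m = s_fun \<alpha> a l + s_fun \<beta> l b))"
    show "\<gamma>2 = \<gamma>" using h g sg by (intro s_unique) (auto simp: mp_def)
  qed
  then show ?thesis using cg by simp
qed


end
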